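(* Let $N>0$, $R=\mathbb{Q}[x_1,x_2,y_1,y_2]$, $w_2=(y_2^{N+1}-x_2^{N+1})/(y_2-x_2)$, and let $u_1,u_2\in R$ be homogeneous with $y_1^{N+1}+y_2^{N+1}-x_1^{N+1}-x_2^{N+1}=u_1(y_1+y_2-x_1-x_2)+u_2(y_1y_2-x_1x_2)$ and $u_i(y_1,y_2,x_1,x_2)=u_i(x_1,x_2,y_1,y_2)$. Let $\gamma=\frac{\partial u_1}{\partial y_1}-\frac{\partial u_1}{\partial y_2}-\frac12\frac{\partial u_2}{\partial y_2}(x_2+y_2)+\frac12\frac{\partial u_2}{\partial y_1}(x_1+y_1)$ and let $\Omega_2(\gamma)$ be the unique polynomial solution $z$ of $2z+\frac{\partial z}{\partial y_1}(y_1-x_1)+\frac{\partial z}{\partial y_2}(y_2-x_2)=\gamma$. Then $u_1+y_1u_2-w_2$ is divisible by $x_1-y_1$ in $R$, and $\Omega_2(\gamma)=-a_2$, where $a_2=\frac12u_2+\frac{u_1+y_1u_2-w_2}{x_1-y_1}$. *)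

theory Defs
  imports Complex_Main "HOL-Library.Poly_Mapping"
begin

text \<open>Multivariate polynomials over the rationals, in the style of the AFP MPoly
  development: a polynomial is a finitely supported map from monomials
  (finitely supported exponent vectors \<open>nat \<Rightarrow>\<^sub>0 nat\<close>) to rational coefficients.
  Variable indices: 0 = x1, 1 = x2, 2 = y1, 3 = y2.\<close>

type_synonym mpoly = "(nat \<Rightarrow>\<^sub>0 nat) \<Rightarrow>\<^sub>0 rat"

definition Var :: "nat \<Rightarrow> mpoly" where
  "Var i = Poly_Mapping.single (Poly_Mapping.single i 1) 1"

definition Const :: "rat \<Rightarrow> mpoly" where
  "Const c = Poly_Mapping.single 0 c"

definition inR :: "mpoly \<Rightarrow> bool" where
  "inR p \<longleftrightarrow> (\<forall>m \<in> Poly_Mapping.keys p. Poly_Mapping.keys m \<subseteq> {0..3})"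

definition mdeg :: "(nat \<Rightarrow>\<^sub>0 nat) \<Rightarrow> nat" where
  "mdeg m = (\<Sum>i\<in>Poly_Mapping.keys m. Poly_Mapping.lookup m i)"

definition homogeneous :: "mpoly \<Rightarrow> bool" where
  "homogeneous p \<longleftrightarrow> (\<exists>d. \<forall>m \<in> Poly_Mapping.keys p. mdeg m = d)"

definition pderiv_var :: "nat \<Rightarrow> mpoly \<Rightarrow> mpoly" where
  "pderiv_var i p = Abs_poly_mapping
     (\<lambda>m. of_nat (Poly_Mapping.lookup m i + 1) * Poly_Mapping.lookup p (m + Poly_Mapping.single i 1))"

definition swp :: "nat \<Rightarrow> nat" where
  "swp i = (if i = 0 then 2 else if i = 1 then 3 else if i = 2 then 0 else if i = 3 then 1 else i)"

definition swap_xy :: "mpoly \<Rightarrow> mpoly" where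
  "swap_xy p = Abs_poly_mapping
     (\<lambda>m. Poly_Mapping.lookup p (Abs_poly_mapping (\<lambda>i. Poly_Mapping.lookup m (swp i))))"

text \<open>w_2 = (y2^(N+1) - x2^(N+1)) / (y2 - x2) = sum_{k=0}^{N} y2^k x2^(N-k).\<close>
definition w2 :: "nat \<Rightarrow> mpoly" where
  "w2 N = (\<Sum>k\<le>N. Var 3 ^ k * Var 1 ^ (N - k))"

end

theory Submission
  imports Defs
begin

abbreviation ev :: "nat \<Rightarrow> (nat \<Rightarrow>\<^sub>0 nat)" where "ev i \<equiv> Poly_Mapping.single i 1"

lemma mono_induct [case_names zero step]:
  assumes "P 0" and "\<And>f a b. a \<notin> Poly_Mapping.keys f \<Longrightarrow> b \<noteq> 0 \<Longrightarrow> P f \<Longrightarrow> P (Poly_Mapping.single a b + f)"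
  shows "P (p :: 'a \<Rightarrow>\<^sub>0 'b::comm_monoid_add)"
proof (induction p rule: Poly_Mapping.update_induct)
  case const then show ?case using assms(1) by simp
next
  case (update f a b)
  have "Poly_Mapping.update a b f = Poly_Mapping.single a b + f"
    using update.hyps(1)
    by (intro poly_mapping_eqI) (auto simp: Poly_Mapping.lookup_update lookup_add lookup_single when_def in_keys_iff)
  then show ?case using assms(2) update by simp
qed

lemma lookup_minus_nat: "Poly_Mapping.lookup (m - n) i = Poly_Mapping.lookup m i - Poly_Mapping.lookup (n :: 'a \<Rightarrow>\<^sub>0 nat) i"
  by (simp add: minus_poly_mapping.rep_eq)

lemma lookup_add_ev: "Poly_Mapping.lookup (m + ev i) j = Poly_Mapping.lookup m j + (if i = j then 1 else 0)"
  by (simp add: lookup_add lookup_single when_def)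

lemma split_ev: "Poly_Mapping.lookup m i \<noteq> 0 \<Longrightarrow> m = (m - ev i) + ev i"
  by (intro poly_mapping_eqI) (auto simp: lookup_add lookup_minus_nat lookup_single when_def)

lemma lookup_Var_mult1: "Poly_Mapping.lookup (Var k * p) (m + ev k) = Poly_Mapping.lookup p m"
proof (induction p rule: mono_induct)
  case zero then show ?case by simp
next
  case (step f a b)
  have "Var k * (Poly_Mapping.single a b + f) = Poly_Mapping.single (ev k + a) b + Var k * f"
    by (simp add: Var_def distrib_left mult_single)
  then show ?case using step by (simp add: lookup_add lookup_single when_def add.commute)
qed

lemma lookup_Var_mult0: "Poly_Mapping.lookup m k = 0 \<Longrightarrow> Poly_Mapping.lookup (Var k * p) m = 0"
proof (induction p rule: mono_induct)
  case zero then show ?case by simp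
next
  case (step f a b)
  have "Var k * (Poly_Mapping.single a b + f) = Poly_Mapping.single (ev k + a) b + Var k * f"
    by (simp add: Var_def distrib_left mult_single)
  moreover have "ev k + a \<noteq> m"
  proof
    assume "ev k + a = m"
    then have "Poly_Mapping.lookup (ev k + a) k = 0" using step by simp
    then show False by (simp add: lookup_add)
  qed
  ultimately show ?case using step by (simp add: lookup_add lookup_single when_def)
qed

lemma lookup_Var_mult: "Poly_Mapping.lookup (Var k * p) m =
   (if Poly_Mapping.lookup m k = 0 then 0 else Poly_Mapping.lookup p (m - ev k))"
  using lookup_Var_mult0[of m k p] lookup_Var_mult1[of k p "m - ev k"] split_ev[of m k] by auto

lemma lookup_Const_mult: "Poly_Mapping.lookup (Const c * p) m = c * Poly_Mapping.lookup p m"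
proof (induction p rule: mono_induct)
  case zero then show ?case by simp
next
  case (step f a b)
  have "Const c * (Poly_Mapping.single a b + f) = Poly_Mapping.single a (c*b) + Const c * f"
    by (simp add: Const_def distrib_left mult_single)
  then show ?case using step by (simp add: lookup_add lookup_single when_def distrib_left)
qed

lemma add_ev_nz: "k + ev i \<noteq> 0"
proof
  assume "k + ev i = 0"
  then have "Poly_Mapping.lookup (k + ev i) i = 0" by simp
  then show False by (simp add: lookup_add lookup_single)
qed

lemma lookup_pderiv: "Poly_Mapping.lookup (pderiv_var i p) m =
   of_nat (Poly_Mapping.lookup m i + 1) * Poly_Mapping.lookup p (m + ev i)"
proof -
  have "{m. of_nat (Poly_Mapping.lookup m i + 1) * Poly_Mapping.lookup p (m + ev i) \<noteq> (0::rat)}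
      \<subseteq> (\<lambda>m. m + ev i) -` Poly_Mapping.keys p"
    by (auto simp: in_keys_iff)
  moreover have "finite ((\<lambda>m. m + ev i) -` Poly_Mapping.keys p)"
    by (rule finite_vimageI) (auto simp: inj_on_def)
  ultimately have "finite {m. of_nat (Poly_Mapping.lookup m i + 1) * Poly_Mapping.lookup p (m + ev i) \<noteq> (0::rat)}"
    by (rule finite_subset)
  then show ?thesis unfolding pderiv_var_def by simp
qed

lemma pderiv_add: "pderiv_var i (p + q) = pderiv_var i p + pderiv_var i q"
  by (intro poly_mapping_eqI) (simp add: lookup_pderiv lookup_add distrib_left)
lemma pderiv_diff: "pderiv_var i (p - q) = pderiv_var i p - pderiv_var i q"
  by (intro poly_mapping_eqI) (simp add: lookup_pderiv lookup_minus right_diff_distrib)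
lemma pderiv_uminus: "pderiv_var i (- p) = - pderiv_var i p"
  by (intro poly_mapping_eqI) (simp add: lookup_pderiv)
lemma pderiv_zero: "pderiv_var i 0 = 0"
  by (intro poly_mapping_eqI) (simp add: lookup_pderiv)
lemma pderiv_Const_mult: "pderiv_var i (Const c * p) = Const c * pderiv_var i p"
  by (intro poly_mapping_eqI) (simp add: lookup_pderiv lookup_Const_mult)
lemma pderiv_one: "pderiv_var i 1 = 0"
  by (intro poly_mapping_eqI) (simp add: lookup_pderiv lookup_one when_def add_ev_nz[simplified])

lemma pderiv_Var_mult: "pderiv_var j (Var k * p) = (if j = k then p else 0) + Var k * pderiv_var j p"
proof (intro poly_mapping_eqI)
  fix m
  show "Poly_Mapping.lookup (pderiv_var j (Var k * p)) m =
        Poly_Mapping.lookup ((if j = k then p else 0) + Var k * pderiv_var j p) m"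
  proof (cases "j = k")
    case True
    show ?thesis
    proof (cases "Poly_Mapping.lookup m k = 0")
      case z: True
      show ?thesis using True z
        by (simp add: lookup_pderiv lookup_add lookup_Var_mult lookup_add_ev)
    next
      case nz: False
      have e: "m + ev k - ev k = m"
        by (intro poly_mapping_eqI) (auto simp: lookup_add lookup_minus_nat lookup_single when_def)
      have e2: "m - ev k + ev k = m" using split_ev[OF nz] by simp
      have l: "Poly_Mapping.lookup (m - ev k) k + 1 = Poly_Mapping.lookup m k"
        using nz by (simp add: lookup_minus_nat)
      have "Poly_Mapping.lookup (pderiv_var j (Var k * p)) m = of_nat (Poly_Mapping.lookup m k + 1) * Poly_Mapping.lookup p m"
        using True by (simp only: lookup_pderiv lookup_Var_mult1)
      moreover have "Poly_Mapping.lookup (Var k * pderiv_var j p) m = of_nat (Poly_Mapping.lookup m k) * Poly_Mapping.lookup p m"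
        using True nz by (simp only: lookup_Var_mult if_False lookup_pderiv l e2)
      ultimately show ?thesis using True by (simp add: lookup_add algebra_simps)
    qed
  next
    case False
    show ?thesis
    proof (cases "Poly_Mapping.lookup m k = 0")
      case True then show ?thesis using False
        by (simp add: lookup_pderiv lookup_add lookup_Var_mult lookup_add_ev lookup_single)
    next
      case nz: False
      have "m + ev j - ev k = m - ev k + ev j"
        using nz False by (intro poly_mapping_eqI) (auto simp: lookup_add lookup_minus_nat lookup_single when_def)
      then show ?thesis using False nz
        by (simp add: lookup_pderiv lookup_add lookup_Var_mult lookup_add_ev lookup_minus_nat lookup_single)
    qed
  qed
qed

lemma pderiv_Var: "pderiv_var j (Var k) = (if j = k then 1 else 0)"
  using pderiv_Var_mult[of j k 1] by (simp add: pderiv_one)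

lemma pderiv_Var_pow: "pderiv_var j (Var k ^ Suc n) = (if j = k then of_nat (Suc n) * Var k ^ n else 0)"
proof (induction n)
  case 0 then show ?case by (simp add: pderiv_Var)
next
  case (Suc n)
  have "pderiv_var j (Var k ^ Suc (Suc n)) = pderiv_var j (Var k * Var k ^ Suc n)" by simp
  also have "\<dots> = (if j = k then Var k ^ Suc n else 0) + Var k * pderiv_var j (Var k ^ Suc n)"
    by (rule pderiv_Var_mult)
  finally show ?case using Suc by (auto simp: algebra_simps)
qed

lemma ev_inj: "Poly_Mapping.single i (Suc 0) = Poly_Mapping.single j (Suc 0) \<Longrightarrow> i = j"
  by (metis lookup_single_eq lookup_single_not_eq nat.distinct(1))

lemma Var_neq: "i \<noteq> j \<Longrightarrow> Var i - Var j \<noteq> 0"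
proof
  assume "i \<noteq> j" "Var i - Var j = 0"
  then have "Poly_Mapping.lookup (Var i - Var j) (ev i) = 0" by simp
  then show False using \<open>i \<noteq> j\<close> ev_inj[of j i] by (auto simp: Var_def lookup_minus lookup_single when_def split: if_splits)
qed

lemma w2_eq: "w2 N * (Var 3 - Var 1) = Var 3 ^ Suc N - Var 1 ^ Suc N"
proof -
  have "{..N} = {..<Suc N}" by auto
  then show ?thesis unfolding w2_def using diff_power_eq_sum[of "Var 3" N "Var 1"]
    by (simp add: mult.commute)
qed

lemma half: "Const (1/2) + Const (1/2) = 1"
  unfolding Const_def by (simp add: single_add[symmetric])

lemma certif:
  fixes V0 V1 V2 V3 u1 u2 q a b c e q2 q3 w w3 K h :: "'a::idom"
  assumes "h + h = 1"
   "K = V2 * b + (u1 + V3 * b) - V0 * b - V1 * b + V2 * (u2 + V3 * e) - V0 * (V1 * e)"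
   "w + V3 * w3 - V1 * w3 = K"
   "a + (u2 + V2 * c) = V0 * q2 - (q + V2 * q2)"
   "b + V2 * e - w3 = V0 * q3 - V2 * q3"
   "u1 + V2 * u2 - w = V0 * q - V2 * q"
  shows "(V0 - V2) * (2 * - (h * u2 + q) + - (h * c + q2) * (V2 - V0) + - (h * e + q3) * (V3 - V1) -
      (a - b - h * e * (V1 + V3) + h * c * (V0 + V2))) = 0"
  using assms by algebra

lemma partA:
  assumes H: "Var 2 ^ (N+1) + Var 3 ^ (N+1) - Var 0 ^ (N+1) - Var 1 ^ (N+1)
           = u1 * (Var 2 + Var 3 - Var 0 - Var 1) + u2 * (Var 2 * Var 3 - Var 0 * Var 1)"
    and Eq: "u1 + Var 2 * u2 - w2 N = (Var 0 - Var 2) * q"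
  shows "2 * (- (Const (1/2) * u2 + q)) + pderiv_var 2 (- (Const (1/2) * u2 + q)) * (Var 2 - Var 0)
          + pderiv_var 3 (- (Const (1/2) * u2 + q)) * (Var 3 - Var 1)
       = pderiv_var 2 u1 - pderiv_var 3 u1
                 - Const (1/2) * pderiv_var 3 u2 * (Var 1 + Var 3)
                 + Const (1/2) * pderiv_var 2 u2 * (Var 0 + Var 2)"
proof -
  define h where "h = Const (1/2)"
  have hh: "h + h = 1" unfolding h_def by (rule half)
  have H': "Var 2 ^ Suc N + Var 3 ^ Suc N - Var 0 ^ Suc N - Var 1 ^ Suc N = Var 2 * u1 + Var 3 * u1 - Var 0 * u1 - Var 1 * u1 + Var 2 * (Var 3 * u2) - Var 0 * (Var 1 * u2)"
    using H by (simp add: algebra_simps)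
  have I2: "of_nat (Suc N) * Var 3 ^ N = Var 2 * pderiv_var 3 u1 + (u1 + Var 3 * pderiv_var 3 u1) - Var 0 * pderiv_var 3 u1 - Var 1 * pderiv_var 3 u1 + Var 2 * (u2 + Var 3 * pderiv_var 3 u2) - Var 0 * (Var 1 * pderiv_var 3 u2)"
    using arg_cong[OF H', of "pderiv_var 3"]
    by (simp only: pderiv_add pderiv_diff pderiv_Var_mult pderiv_Var_pow) simp
  have W': "w2 N * Var 3 - w2 N * Var 1 = Var 3 ^ Suc N - Var 1 ^ Suc N"
    using w2_eq[of N] by (simp add: algebra_simps)
  have W': "Var 3 * w2 N - Var 1 * w2 N = Var 3 ^ Suc N - Var 1 ^ Suc N"
    using W' by (simp add: algebra_simps)
  have W3: "w2 N + Var 3 * pderiv_var 3 (w2 N) - Var 1 * pderiv_var 3 (w2 N) = of_nat (Suc N) * Var 3 ^ N"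
    using arg_cong[OF W', of "pderiv_var 3"]
    by (simp only: pderiv_add pderiv_diff pderiv_Var_mult pderiv_Var_pow) simp
  have W2a: "pderiv_var 2 (w2 N) * (Var 3 - Var 1) = 0"
    using arg_cong[OF W', of "pderiv_var 2"]
    by (simp only: pderiv_add pderiv_diff pderiv_Var_mult pderiv_Var_pow) (simp add: algebra_simps)
  have W2: "pderiv_var 2 (w2 N) = 0" using W2a Var_neq[of 3 1] by simp
  have Eq': "u1 + Var 2 * u2 - w2 N = Var 0 * q - Var 2 * q" using Eq by (simp add: algebra_simps)
  have E2: "pderiv_var 2 u1 + (u2 + Var 2 * pderiv_var 2 u2) = Var 0 * pderiv_var 2 q - (q + Var 2 * pderiv_var 2 q)"
    using arg_cong[OF Eq', of "pderiv_var 2"] W2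
    by (simp add: pderiv_add pderiv_diff pderiv_Var_mult)
  have E3: "pderiv_var 3 u1 + Var 2 * pderiv_var 3 u2 - pderiv_var 3 (w2 N) = Var 0 * pderiv_var 3 q - Var 2 * pderiv_var 3 q"
    using arg_cong[OF Eq', of "pderiv_var 3"]
    by (simp add: pderiv_add pderiv_diff pderiv_Var_mult)
  have dz2: "pderiv_var 2 (- (h * u2 + q)) = - (h * pderiv_var 2 u2 + pderiv_var 2 q)"
    unfolding h_def by (simp only: pderiv_uminus pderiv_add pderiv_Const_mult)
  have dz3: "pderiv_var 3 (- (h * u2 + q)) = - (h * pderiv_var 3 u2 + pderiv_var 3 q)"
    unfolding h_def by (simp only: pderiv_uminus pderiv_add pderiv_Const_mult)
  have "(Var 0 - Var 2) * (2 * (- (h * u2 + q)) + pderiv_var 2 (- (h * u2 + q)) * (Var 2 - Var 0)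
          + pderiv_var 3 (- (h * u2 + q)) * (Var 3 - Var 1)
       - (pderiv_var 2 u1 - pderiv_var 3 u1
                 - h * pderiv_var 3 u2 * (Var 1 + Var 3)
                 + h * pderiv_var 2 u2 * (Var 0 + Var 2))) = 0"
    unfolding dz2 dz3 by (rule certif[OF hh I2 W3 E2 E3 Eq'])
  then show ?thesis using Var_neq[of 0 2] unfolding h_def by simp
qed

definition Lop :: "mpoly \<Rightarrow> mpoly" where
  "Lop z = 2 * z + pderiv_var 2 z * (Var 2 - Var 0) + pderiv_var 3 z * (Var 3 - Var 1)"

lemma Lop_diff: "Lop (a - b) = Lop a - Lop b"
  unfolding Lop_def by (simp add: pderiv_diff algebra_simps)

lemma lookup_euler: "Poly_Mapping.lookup (Var k * pderiv_var k p) m = of_nat (Poly_Mapping.lookup m k) * Poly_Mapping.lookup p m"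
proof (cases "Poly_Mapping.lookup m k = 0")
  case True then show ?thesis by (simp add: lookup_Var_mult)
next
  case False
  have e2: "m - ev k + ev k = m" using split_ev[OF False] by simp
  have l: "Poly_Mapping.lookup (m - ev k) k + 1 = Poly_Mapping.lookup m k"
    using False by (simp add: lookup_minus_nat)
  show ?thesis using False by (simp only: lookup_Var_mult if_False lookup_pderiv l e2)
qed

lemma lookup_cross: "(Poly_Mapping.lookup m i \<noteq> 0 \<Longrightarrow> Poly_Mapping.lookup p (m - ev i + ev k) = 0)
   \<Longrightarrow> Poly_Mapping.lookup (Var i * pderiv_var k p) m = 0"
  by (simp add: lookup_Var_mult lookup_pderiv)

lemma Lop_inj: assumes "Lop z = 0" shows "z = 0"
proof (rule ccontr)
  assume nz: "z \<noteq> 0"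
  define yd where "yd m = Poly_Mapping.lookup m 2 + Poly_Mapping.lookup m 3" for m :: "nat \<Rightarrow>\<^sub>0 nat"
  have fin: "finite (yd ` Poly_Mapping.keys z)" by simp
  have ne: "yd ` Poly_Mapping.keys z \<noteq> {}" using nz by simp
  obtain m where m: "m \<in> Poly_Mapping.keys z" "yd m = Max (yd ` Poly_Mapping.keys z)"
    using Max_in[OF fin ne] by auto
  have mx: "\<And>m'. m' \<in> Poly_Mapping.keys z \<Longrightarrow> yd m' \<le> yd m"
    using m(2) fin by simp
  have cr: "Poly_Mapping.lookup z (m - ev i + ev k) = 0" if "i \<in> {0,1}" "k \<in> {2,3}" for i k
  proof -
    have "yd (m - ev i + ev k) = yd m + 1" using that
      by (auto simp: yd_def lookup_add lookup_minus_nat lookup_single)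
    then show ?thesis using mx[of "m - ev i + ev k"] by (auto simp: in_keys_iff)
  qed
  have "Lop z = z + z + Var 2 * pderiv_var 2 z - Var 0 * pderiv_var 2 z + Var 3 * pderiv_var 3 z - Var 1 * pderiv_var 3 z"
    unfolding Lop_def by (simp add: algebra_simps mult_2)
  then have "Poly_Mapping.lookup (Lop z) m = Poly_Mapping.lookup z m + Poly_Mapping.lookup z m
     + Poly_Mapping.lookup (Var 2 * pderiv_var 2 z) m - Poly_Mapping.lookup (Var 0 * pderiv_var 2 z) m
     + Poly_Mapping.lookup (Var 3 * pderiv_var 3 z) m - Poly_Mapping.lookup (Var 1 * pderiv_var 3 z) m"
    by (simp only: lookup_add lookup_minus)
  also have "\<dots> = (2 + of_nat (yd m)) * Poly_Mapping.lookup z m"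
    using lookup_cross[of m 0 z 2] lookup_cross[of m 1 z 3] cr[of 0 2] cr[of 1 3]
    by (simp add: lookup_euler yd_def algebra_simps)
  finally have "Poly_Mapping.lookup (Lop z) m = (2 + of_nat (yd m)) * Poly_Mapping.lookup z m" .
  moreover have "Poly_Mapping.lookup z m \<noteq> 0" using m(1) by (simp add: in_keys_iff)
  moreover have "(2 + of_nat (yd m) :: rat) \<noteq> 0" by (simp add: add_pos_nonneg)
  ultimately show False using assms by simp
qed

definition free2 :: "mpoly \<Rightarrow> bool" where
  "free2 p \<longleftrightarrow> (\<forall>m \<in> Poly_Mapping.keys p. Poly_Mapping.lookup m 2 = 0)"

lemma free2_D_mult: assumes "free2 ((Var 0 - Var 2) * K)" shows "K = 0"
proof (rule ccontr)
  assume nz: "K \<noteq> 0"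
  define yd where "yd m = Poly_Mapping.lookup m 2" for m :: "nat \<Rightarrow>\<^sub>0 nat"
  have fin: "finite (yd ` Poly_Mapping.keys K)" by simp
  have ne: "yd ` Poly_Mapping.keys K \<noteq> {}" using nz by simp
  obtain m where m: "m \<in> Poly_Mapping.keys K" "yd m = Max (yd ` Poly_Mapping.keys K)"
    using Max_in[OF fin ne] by auto
  have mx: "\<And>m'. m' \<in> Poly_Mapping.keys K \<Longrightarrow> yd m' \<le> yd m"
    using m(2) fin by simp
  have "yd (m + ev 2 - ev 0) = yd m + 1"
    by (auto simp: yd_def lookup_add lookup_minus_nat lookup_single)
  then have c0: "Poly_Mapping.lookup K (m + ev 2 - ev 0) = 0"
    using mx[of "m + ev 2 - ev 0"] by (auto simp: in_keys_iff)
  have "Poly_Mapping.lookup ((Var 0 - Var 2) * K) (m + ev 2) = Poly_Mapping.lookup (Var 0 * K) (m + ev 2) - Poly_Mapping.lookup (Var 2 * K) (m + ev 2)"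
    by (simp add: left_diff_distrib lookup_minus)
  also have "\<dots> = - Poly_Mapping.lookup K m"
    using c0 by (simp only: lookup_Var_mult1) (simp add: lookup_Var_mult)
  finally have "Poly_Mapping.lookup ((Var 0 - Var 2) * K) (m + ev 2) \<noteq> 0"
    using m(1) by (simp add: in_keys_iff)
  then have "m + ev 2 \<in> Poly_Mapping.keys ((Var 0 - Var 2) * K)" by (simp add: in_keys_iff)
  then have "Poly_Mapping.lookup (m + ev 2) 2 = 0" using assms unfolding free2_def by blast
  then show False by (simp add: lookup_add lookup_single)
qed

lemma keys_diff_sub: "Poly_Mapping.keys (p - q) \<subseteq> Poly_Mapping.keys p \<union> Poly_Mapping.keys (q::mpoly)"
  by (auto simp: in_keys_iff lookup_minus)

lemma inR_add: "inR p \<Longrightarrow> inR q \<Longrightarrow> inR (p + q)"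
  unfolding inR_def using keys_add[of p q] by blast
lemma inR_diff: "inR p \<Longrightarrow> inR q \<Longrightarrow> inR (p - q)"
  unfolding inR_def using keys_diff_sub[of p q] by blast
lemma inR_uminus: "inR p \<Longrightarrow> inR (- p)"
  unfolding inR_def by (simp add: in_keys_iff)
lemma inR_mult: assumes "inR p" "inR q" shows "inR (p * q)"
  unfolding inR_def
proof
  fix m assume "m \<in> Poly_Mapping.keys (p * q)"
  then obtain a b where ab: "m = a + b" "a \<in> Poly_Mapping.keys p" "b \<in> Poly_Mapping.keys q"
    using keys_mult[of p q] by blast
  then show "Poly_Mapping.keys m \<subseteq> {0..3}"
    using keys_add[of a b] assms unfolding inR_def by blast
qed
lemma inR_zero: "inR 0" unfolding inR_def by simp
lemma inR_single: "Poly_Mapping.keys a \<subseteq> {0..3} \<Longrightarrow> inR (Poly_Mapping.single a b)"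
  unfolding inR_def by simp
lemma inR_Var: "i \<le> 3 \<Longrightarrow> inR (Var i)"
  unfolding Var_def by (rule inR_single) simp
lemma inR_pow: "inR p \<Longrightarrow> inR (p ^ n)"
proof (induction n)
  case 0 then show ?case unfolding inR_def by simp
next
  case (Suc n) then show ?case by (simp add: inR_mult)
qed

lemma free2_add: "free2 p \<Longrightarrow> free2 q \<Longrightarrow> free2 (p + q)"
  unfolding free2_def using keys_add[of p q] by blast
lemma free2_diff: "free2 p \<Longrightarrow> free2 q \<Longrightarrow> free2 (p - q)"
  unfolding free2_def using keys_diff_sub[of p q] by blast
lemma free2_mult: assumes "free2 p" "free2 q" shows "free2 (p * q)"
  unfolding free2_def
proof
  fix m assume "m \<in> Poly_Mapping.keys (p * q)"
  then obtain a b where ab: "m = a + b" "a \<in> Poly_Mapping.keys p" "b \<in> Poly_Mapping.keys q"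
    using keys_mult[of p q] by blast
  then show "Poly_Mapping.lookup m 2 = 0"
    using assms unfolding free2_def by (simp add: lookup_add)
qed
lemma free2_Var: "i \<noteq> 2 \<Longrightarrow> free2 (Var i)"
  unfolding free2_def Var_def by (simp add: lookup_single)
lemma free2_zero: "free2 0" unfolding free2_def by simp

lemma Var_pow: "Var i ^ k = Poly_Mapping.single (Poly_Mapping.single i k) 1"
proof (induction k)
  case 0 then show ?case by simp
next
  case (Suc k)
  then show ?case by (simp add: Var_def mult_single single_add[symmetric])
qed

lemma pow_div: "\<exists>h. inR h \<and> Var 2 ^ k = Var 0 ^ k + (Var 2 - Var 0) * h"
proof (induction k)
  case 0 then show ?case using inR_zero by (intro exI[of _ 0]) simp
next
  case (Suc k)
  then obtain h where h: "inR h" "Var 2 ^ k = Var 0 ^ k + (Var 2 - Var 0) * h" by blast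
  have "Var 2 ^ Suc k = Var 2 * (Var 0 ^ k + (Var 2 - Var 0) * h)"
    using h(2) by simp
  also have "\<dots> = Var 0 ^ Suc k + (Var 2 - Var 0) * (Var 0 ^ k + Var 2 * h)"
    by (simp add: algebra_simps)
  finally have "Var 2 ^ Suc k = Var 0 ^ Suc k + (Var 2 - Var 0) * (Var 0 ^ k + Var 2 * h)" .
  moreover have "inR (Var 0 ^ k + Var 2 * h)"
    using h(1) by (intro inR_add inR_mult inR_pow inR_Var) auto
  ultimately show ?case by blast
qed

lemma mono_div:
  assumes "Poly_Mapping.keys a \<subseteq> {0..3}"
  shows "\<exists>q r. Poly_Mapping.single a b = (Var 0 - Var 2) * q + r \<and> inR q \<and> free2 r"
proof -
  define k where "k = Poly_Mapping.lookup a 2"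
  define a' where "a' = a - Poly_Mapping.single 2 k"
  have aa: "a = a' + Poly_Mapping.single 2 k"
    unfolding a'_def k_def by (intro poly_mapping_eqI) (auto simp: lookup_add lookup_minus_nat lookup_single when_def)
  have ka: "Poly_Mapping.keys a' \<subseteq> {0..3}"
    using assms unfolding a'_def by (auto simp: in_keys_iff lookup_minus_nat)
  obtain h where h: "inR h" "Var 2 ^ k = Var 0 ^ k + (Var 2 - Var 0) * h" using pow_div by blast
  have "Poly_Mapping.single a b = Poly_Mapping.single a' b * Var 2 ^ k"
    by (subst aa) (simp add: Var_pow mult_single)
  also have "\<dots> = Poly_Mapping.single a' b * (Var 0 ^ k + (Var 2 - Var 0) * h)"
    using h(2) by simp
  also have "\<dots> = (Var 0 - Var 2) * (- (Poly_Mapping.single a' b * h)) + Poly_Mapping.single a' b * Var 0 ^ k"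
    by (simp add: algebra_simps)
  finally have e: "Poly_Mapping.single a b = (Var 0 - Var 2) * (- (Poly_Mapping.single a' b * h)) + Poly_Mapping.single a' b * Var 0 ^ k" .
  have "inR (- (Poly_Mapping.single a' b * h))" using ka h(1) by (intro inR_uminus inR_mult inR_single)
  moreover have "free2 (Poly_Mapping.single a' b * Var 0 ^ k)"
    unfolding Var_pow free2_def a'_def k_def
    by (simp add: mult_single lookup_add lookup_minus_nat lookup_single)
  ultimately show ?thesis using e by blast
qed

lemma poly_div:
  "inR p \<Longrightarrow> \<exists>q r. p = (Var 0 - Var 2) * q + r \<and> inR q \<and> free2 r"
proof (induction p rule: mono_induct)
  case zero then show ?case using inR_zero free2_zero by (intro exI[of _ 0]) simp
next
  case (step f a b)
  have ka: "a \<in> Poly_Mapping.keys (Poly_Mapping.single a b + f)"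
    using step(1,2) by (simp add: in_keys_iff lookup_add)
  have kf: "Poly_Mapping.keys f \<subseteq> Poly_Mapping.keys (Poly_Mapping.single a b + f)"
    using step(1) by (auto simp: in_keys_iff lookup_add lookup_single when_def)
  have "Poly_Mapping.keys a \<subseteq> {0..3}" using step(4) ka unfolding inR_def by blast
  then obtain q1 r1 where 1: "Poly_Mapping.single a b = (Var 0 - Var 2) * q1 + r1" "inR q1" "free2 r1"
    using mono_div by blast
  have "inR f" using step(4) kf unfolding inR_def by blast
  then obtain q2 r2 where 2: "f = (Var 0 - Var 2) * q2 + r2" "inR q2" "free2 r2"
    using step(3) by blast
  have "Poly_Mapping.single a b + f = ((Var 0 - Var 2) * q1 + r1) + ((Var 0 - Var 2) * q2 + r2)"
    by (simp only: 1(1)[symmetric] 2(1)[symmetric])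
  also have "\<dots> = (Var 0 - Var 2) * (q1 + q2) + (r1 + r2)"
    by (simp add: algebra_simps)
  finally have "Poly_Mapping.single a b + f = (Var 0 - Var 2) * (q1 + q2) + (r1 + r2)" .
  then show ?case using 1 2 inR_add free2_add by blast
qed

lemma certif2:
  fixes V0 V1 V2 V3 u1 u2 w g P0 P1 P2 P3 :: "'a::idom"
  assumes "P2 + P3 - P0 - P1 = u1 * (V2 + V3 - V0 - V1) + u2 * (V2 * V3 - V0 * V1)"
    "w * (V3 - V1) = P3 - P1"
    "P2 - P0 = (V2 - V0) * g"
  shows "(u1 + V2 * u2 - w) * (V3 - V1) = (V0 - V2) * ((u1 + V2 * u2 - w) + w - g - u2 * (V2 - V1))"
  using assms by algebra

lemma certif3:
  fixes E D r q0 X Y :: "'a::idom"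
  assumes "E * Y = D * X" "E = D * q0 + r"
  shows "r * Y = D * (X - q0 * Y)"
  using assms by algebra

lemma exists_q:
  assumes H: "Var 2 ^ (N+1) + Var 3 ^ (N+1) - Var 0 ^ (N+1) - Var 1 ^ (N+1)
           = u1 * (Var 2 + Var 3 - Var 0 - Var 1) + u2 * (Var 2 * Var 3 - Var 0 * Var 1)"
    and R: "inR u1" "inR u2"
  shows "\<exists>q. inR q \<and> u1 + Var 2 * u2 - w2 N = (Var 0 - Var 2) * q"
proof -
  define E where "E = u1 + Var 2 * u2 - w2 N"
  have sR: "finite A \<Longrightarrow> (\<forall>x\<in>A. inR (f x)) \<Longrightarrow> inR (sum f A)" for A and f :: "nat \<Rightarrow> mpoly"
    by (induction rule: finite_induct) (auto intro: inR_add inR_zero)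
  have w2R: "inR (w2 N)" unfolding w2_def
    by (rule sR) (auto intro!: inR_mult inR_pow inR_Var)
  have "inR E" unfolding E_def using R w2R by (intro inR_diff inR_add inR_mult inR_Var) auto
  then obtain q0 r where qr: "E = (Var 0 - Var 2) * q0 + r" "inR q0" "free2 r"
    using poly_div by blast
  have H2: "Var 2 ^ Suc N + Var 3 ^ Suc N - Var 0 ^ Suc N - Var 1 ^ Suc N
           = u1 * (Var 2 + Var 3 - Var 0 - Var 1) + u2 * (Var 2 * Var 3 - Var 0 * Var 1)"
    using H by simp
  obtain g where g: "Var 2 ^ Suc N - Var 0 ^ Suc N = (Var 2 - Var 0) * g"
    using diff_power_eq_sum[of "Var 2" N "Var 0"] by blast
  have EE: "E * (Var 3 - Var 1) = (Var 0 - Var 2) * (E + w2 N - g - u2 * (Var 2 - Var 1))"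
    unfolding E_def by (rule certif2[OF H2 w2_eq[of N] g])
  have "r * (Var 3 - Var 1) = (Var 0 - Var 2) * (E + w2 N - g - u2 * (Var 2 - Var 1) - q0 * (Var 3 - Var 1))"
    by (rule certif3[OF EE qr(1)])
  moreover have "free2 (r * (Var 3 - Var 1))"
    using qr(3) by (intro free2_mult free2_diff free2_Var) auto
  ultimately have "E + w2 N - g - u2 * (Var 2 - Var 1) - q0 * (Var 3 - Var 1) = 0"
    using free2_D_mult by metis
  then have "r * (Var 3 - Var 1) = 0" using \<open>r * _ = _\<close> by simp
  then have "r = 0" using Var_neq[of 3 1] by simp
  then show ?thesis using qr E_def by auto
qed

theorem lemmaA5:
  fixes N :: nat and u1 u2 :: mpoly
  assumes "N > 0"
    and "inR u1" and "inR u2"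
    and "homogeneous u1" and "homogeneous u2"
    and "Var 2 ^ (N+1) + Var 3 ^ (N+1) - Var 0 ^ (N+1) - Var 1 ^ (N+1)
           = u1 * (Var 2 + Var 3 - Var 0 - Var 1) + u2 * (Var 2 * Var 3 - Var 0 * Var 1)"
    and "swap_xy u1 = u1" and "swap_xy u2 = u2"
  defines "\<gamma> \<equiv> pderiv_var 2 u1 - pderiv_var 3 u1
                 - Const (1/2) * pderiv_var 3 u2 * (Var 1 + Var 3)
                 + Const (1/2) * pderiv_var 2 u2 * (Var 0 + Var 2)"
  shows "(\<exists>q. inR q \<and> u1 + Var 2 * u2 - w2 N = (Var 0 - Var 2) * q)
       \<and> (\<forall>q. inR q \<and> u1 + Var 2 * u2 - w2 N = (Var 0 - Var 2) * q \<longrightarrow>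
            (\<forall>z. inR z \<longrightarrow>
               (2 * z + pderiv_var 2 z * (Var 2 - Var 0) + pderiv_var 3 z * (Var 3 - Var 1) = \<gamma>
                \<longleftrightarrow> z = - (Const (1/2) * u2 + q))))"
proof (intro conjI allI impI)
  show "\<exists>q. inR q \<and> u1 + Var 2 * u2 - w2 N = (Var 0 - Var 2) * q"
    by (rule exists_q[OF assms(6) assms(2) assms(3)])
next
  fix q z
  assume qq: "inR q \<and> u1 + Var 2 * u2 - w2 N = (Var 0 - Var 2) * q" and "inR z"
  have A: "Lop (- (Const (1/2) * u2 + q)) = \<gamma>"
    unfolding Lop_def \<gamma>_def by (rule partA[OF assms(6) qq[THEN conjunct2]])
  show "2 * z + pderiv_var 2 z * (Var 2 - Var 0) + pderiv_var 3 z * (Var 3 - Var 1) = \<gamma>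
                \<longleftrightarrow> z = - (Const (1/2) * u2 + q)"
  proof
    assume "2 * z + pderiv_var 2 z * (Var 2 - Var 0) + pderiv_var 3 z * (Var 3 - Var 1) = \<gamma>"
    then have "Lop z = \<gamma>" unfolding Lop_def .
    then have "Lop (z - (- (Const (1/2) * u2 + q))) = 0" using A by (simp only: Lop_diff) simp
    then show "z = - (Const (1/2) * u2 + q)" using Lop_inj by fastforce
  next
    assume "z = - (Const (1/2) * u2 + q)"
    then show "2 * z + pderiv_var 2 z * (Var 2 - Var 0) + pderiv_var 3 z * (Var 3 - Var 1) = \<gamma>"
      using A unfolding Lop_def by simp
  qed
qed

end
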